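(* Let $\Gamma$ be a distance-regular graph with diameter $D\ge3$ and $a_1\ne0$. Let $\sigma_0,\dots,\sigma_D$ be a feasible pseudo cosine sequence, let $\rho_0,\dots,\rho_D$ be a nontrivial pseudo cosine sequence such that $\sigma_0,\dots,\sigma_D$ and $\rho_0,\dots,\rho_D$ form a tight pair, and let $\varepsilon$ be the corresponding auxiliary parameter. Then $\sigma_j-\varepsilon\sigma_{j-1}\ne0$ for $1\le j\le D$ and $$\rho_i=\prod_{j=1}^{i}\frac{\sigma_{j-1}-\varepsilon\sigma_j}{\sigma_j-\varepsilon\sigma_{j-1}}\qquad(0\le i\le D).$$
   Context: $\Gamma$ is a finite connected undirected graph without loops or multiple edges, distance-regular with diameter $D$, intersection numbers $a_i,b_i,c_i$ ($c_0=0$, $b_D=0$), valency $k$, $c_i+a_i+b_i=k$. For $\theta\in\mathbb{R}$ the pseudo cosine sequence for $\theta$ is the sequence of reals $\sigma_0,\dots,\sigma_D$ with $\sigma_0=1$ and $c_i\sigma_{i-1}+a_i\sigma_i+b_i\sigma_{i+1}=\theta\sigma_i$ for $0\le i\le D-1$; nontrivial means $\sigma_1\ne1$. Pseudo cosine sequences $\sigma_i$, $\rho_i$ form a tight pair if $(\sigma_i\rho_i)_{i=0}^D$ is a pseudo cosine sequence. For a tight pair of nontrivial pseudo cosine sequences, an auxiliary parameter is a real $\varepsilon$ with $\sigma_i\rho_i-\sigma_{i-1}\rho_{i-1}=\varepsilon(\sigma_{i-1}\rho_i-\sigma_i\rho_{i-1})$ for $1\le i\le D$. When $a_1\ne0$: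 a nontrivial pseudo cosine sequence is tight if some nontrivial pseudo cosine sequence forms a tight pair with it; a pseudo cosine sequence $\sigma_0,\dots,\sigma_D$ is feasible if it is tight and $\sigma_{i-1}\ne\sigma_{i+1}$ for $1\le i\le D-1$. *)

theory Defs
  imports Complex_Main
begin

definition simple_graph :: "'a set \<Rightarrow> ('a \<Rightarrow> 'a \<Rightarrow> bool) \<Rightarrow> bool" where
  "simple_graph V E \<longleftrightarrow> finite V \<and> V \<noteq> {} \<and>
     (\<forall>x y. E x y \<longrightarrow> x \<in> V \<and> y \<in> V) \<and>
     (\<forall>x y. E x y \<longrightarrow> E y x) \<and> (\<forall>x. \<not> E x x)"

definition connected_graph :: "'a set \<Rightarrow> ('a \<Rightarrow> 'a \<Rightarrow> bool) \<Rightarrow> bool" where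
  "connected_graph V E \<longleftrightarrow> (\<forall>x\<in>V. \<forall>y\<in>V. \<exists>n. (E ^^ n) x y)"

definition gdist :: "('a \<Rightarrow> 'a \<Rightarrow> bool) \<Rightarrow> 'a \<Rightarrow> 'a \<Rightarrow> nat" where
  "gdist E x y = (LEAST n. (E ^^ n) x y)"

definition diameter :: "'a set \<Rightarrow> ('a \<Rightarrow> 'a \<Rightarrow> bool) \<Rightarrow> nat" where
  "diameter V E = Max {gdist E x y | x y. x \<in> V \<and> y \<in> V}"

definition distance_regular ::
  "'a set \<Rightarrow> ('a \<Rightarrow> 'a \<Rightarrow> bool) \<Rightarrow> nat \<Rightarrow> (nat \<Rightarrow> nat) \<Rightarrow> (nat \<Rightarrow> nat) \<Rightarrow> (nat \<Rightarrow> nat) \<Rightarrow> bool" where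
  "distance_regular V E D a b c \<longleftrightarrow>
     simple_graph V E \<and> connected_graph V E \<and> diameter V E = D \<and> c 0 = 0 \<and>
     (\<forall>x\<in>V. \<forall>y\<in>V. let i = gdist E x y in
        (i \<ge> 1 \<longrightarrow> c i = card {z\<in>V. E y z \<and> gdist E x z = i - 1}) \<and>
        a i = card {z\<in>V. E y z \<and> gdist E x z = i} \<and>
        b i = card {z\<in>V. E y z \<and> gdist E x z = i + 1})"

definition pseudo_cosine_for ::
  "nat \<Rightarrow> (nat \<Rightarrow> nat) \<Rightarrow> (nat \<Rightarrow> nat) \<Rightarrow> (nat \<Rightarrow> nat) \<Rightarrow> real \<Rightarrow> (nat \<Rightarrow> real) \<Rightarrow> bool" where
  "pseudo_cosine_for D a b c \<theta> \<sigma> \<longleftrightarrow> \<sigma> 0 = 1 \<and>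
     (\<forall>i<D. (if i = 0 then 0 else real (c i) * \<sigma> (i - 1)) + real (a i) * \<sigma> i
              + real (b i) * \<sigma> (i + 1) = \<theta> * \<sigma> i)"

definition pseudo_cosine ::
  "nat \<Rightarrow> (nat \<Rightarrow> nat) \<Rightarrow> (nat \<Rightarrow> nat) \<Rightarrow> (nat \<Rightarrow> nat) \<Rightarrow> (nat \<Rightarrow> real) \<Rightarrow> bool" where
  "pseudo_cosine D a b c \<sigma> \<longleftrightarrow> (\<exists>\<theta>. pseudo_cosine_for D a b c \<theta> \<sigma>)"

definition nontrivial_pc ::
  "nat \<Rightarrow> (nat \<Rightarrow> nat) \<Rightarrow> (nat \<Rightarrow> nat) \<Rightarrow> (nat \<Rightarrow> nat) \<Rightarrow> (nat \<Rightarrow> real) \<Rightarrow> bool" where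
  "nontrivial_pc D a b c \<sigma> \<longleftrightarrow> pseudo_cosine D a b c \<sigma> \<and> \<sigma> 1 \<noteq> 1"

definition tight_pair ::
  "nat \<Rightarrow> (nat \<Rightarrow> nat) \<Rightarrow> (nat \<Rightarrow> nat) \<Rightarrow> (nat \<Rightarrow> nat) \<Rightarrow> (nat \<Rightarrow> real) \<Rightarrow> (nat \<Rightarrow> real) \<Rightarrow> bool" where
  "tight_pair D a b c \<sigma> \<rho> \<longleftrightarrow> pseudo_cosine D a b c \<sigma> \<and> pseudo_cosine D a b c \<rho> \<and>
     pseudo_cosine D a b c (\<lambda>i. \<sigma> i * \<rho> i)"

definition auxiliary_parameter ::
  "nat \<Rightarrow> (nat \<Rightarrow> real) \<Rightarrow> (nat \<Rightarrow> real) \<Rightarrow> real \<Rightarrow> bool" where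
  "auxiliary_parameter D \<sigma> \<rho> \<epsilon> \<longleftrightarrow>
     (\<forall>i\<in>{1..D}. \<sigma> i * \<rho> i - \<sigma> (i - 1) * \<rho> (i - 1)
                  = \<epsilon> * (\<sigma> (i - 1) * \<rho> i - \<sigma> i * \<rho> (i - 1)))"

definition tight_pc ::
  "nat \<Rightarrow> (nat \<Rightarrow> nat) \<Rightarrow> (nat \<Rightarrow> nat) \<Rightarrow> (nat \<Rightarrow> nat) \<Rightarrow> (nat \<Rightarrow> real) \<Rightarrow> bool" where
  "tight_pc D a b c \<sigma> \<longleftrightarrow> nontrivial_pc D a b c \<sigma> \<and>
     (\<exists>\<rho>. nontrivial_pc D a b c \<rho> \<and> tight_pair D a b c \<sigma> \<rho>)"

definition feasible_pc ::
  "nat \<Rightarrow> (nat \<Rightarrow> nat) \<Rightarrow> (nat \<Rightarrow> nat) \<Rightarrow> (nat \<Rightarrow> nat) \<Rightarrow> (nat \<Rightarrow> real) \<Rightarrow> bool" where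
  "feasible_pc D a b c \<sigma> \<longleftrightarrow> tight_pc D a b c \<sigma> \<and>
     (\<forall>i\<in>{1..D-1}. \<sigma> (i - 1) \<noteq> \<sigma> (i + 1))"

end

theory Submission imports Defs begin
lemma pc_descent:
  assumes P: "pseudo_cosine_for D a b c \<theta> x"
    and cpos: "\<And>i. 1 \<le> i \<Longrightarrow> i < D \<Longrightarrow> c i \<noteq> 0"
  shows "m < D \<Longrightarrow> x m = 0 \<Longrightarrow> x (Suc m) = 0 \<Longrightarrow> False"
proof (induction m)
  case 0
  then show ?case using P by (simp add: pseudo_cosine_for_def)
next
  case (Suc n)
  have "(if Suc n = 0 then 0 else real (c (Suc n)) * x (Suc n - 1)) + real (a (Suc n)) * x (Suc n)
              + real (b (Suc n)) * x (Suc n + 1) = \<theta> * x (Suc n)"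
    using P Suc.prems(1) unfolding pseudo_cosine_for_def by blast
  then have "real (c (Suc n)) * x n = 0" using Suc.prems by simp
  moreover have "c (Suc n) \<noteq> 0" using cpos Suc.prems(1) by simp
  ultimately have "x n = 0" by simp
  then show ?case using Suc by simp
qed

lemma pc_rec:
  assumes "pseudo_cosine_for D a b c \<theta> x" "i < D"
  shows "(if i = 0 then 0 else real (c i) * x (i - 1)) + real (a i) * x i
              + real (b i) * x (i + 1) = \<theta> * x i"
  using assms unfolding pseudo_cosine_for_def by blast

lemma pc_theta:
  assumes "pseudo_cosine_for D a b c \<theta> x" "0 < D" "a 0 = 0"
  shows "\<theta> = real (b 0) * x 1" "x 0 = 1"
  using pc_rec[OF assms(1,2)] assms(1,3) by (auto simp: pseudo_cosine_for_def)

lemma alg_nz: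
  fixes \<sigma> \<rho> :: "nat \<Rightarrow> real"
  assumes D3: "D \<ge> 3" and a1: "a 1 \<noteq> 0" and a0: "a 0 = 0"
    and k1: "c 1 + a 1 + b 1 = b 0" and k2: "c 2 + a 2 + b 2 = b 0"
    and cpos: "\<And>i. 1 \<le> i \<Longrightarrow> i < D \<Longrightarrow> c i \<noteq> 0"
    and feas: "\<And>i. 1 \<le> i \<Longrightarrow> i \<le> D - 1 \<Longrightarrow> \<sigma> (i-1) \<noteq> \<sigma> (i+1)"
    and s1: "\<sigma> 1 \<noteq> 1" and r1: "\<rho> 1 \<noteq> 1"
    and Ps: "pseudo_cosine_for D a b c ts \<sigma>"
    and Pr: "pseudo_cosine_for D a b c tr \<rho>"
    and Pt: "pseudo_cosine_for D a b c tt (\<lambda>i. \<sigma> i * \<rho> i)"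
    and aux: "auxiliary_parameter D \<sigma> \<rho> \<epsilon>"
  shows "j \<in> {1..D} \<Longrightarrow> \<sigma> j - \<epsilon> * \<sigma> (j - 1) \<noteq> 0"
proof -
  have D0: "0 < D" using D3 by simp
  note ths = pc_theta[OF Ps D0 a0] and thr = pc_theta[OF Pr D0 a0] and tht = pc_theta[OF Pt D0 a0]
  have AX: "\<And>i. 1 \<le> i \<Longrightarrow> i \<le> D \<Longrightarrow> \<sigma> i * \<rho> i - \<sigma> (i - 1) * \<rho> (i - 1)
                  = \<epsilon> * (\<sigma> (i - 1) * \<rho> i - \<sigma> i * \<rho> (i - 1))"
    using aux unfolding auxiliary_parameter_def by auto
  have c2: "real (c 2) > 0" using cpos[of 2] D3 by simp
  have a1p: "real (a 1) > 0" using a1 by simp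
  have k1r: "real (c 1) + real (a 1) + real (b 1) = real (b 0)" using k1 by (metis of_nat_add)
  have k2r: "real (c 2) + real (a 2) + real (b 2) = real (b 0)" using k2 by (metis of_nat_add)
  have s1r: "real (c 1) + real (a 1) * \<sigma> 1 + real (b 1) * \<sigma> 2 = real (b 0) * \<sigma> 1 * \<sigma> 1"
    using pc_rec[OF Ps, of 1] D3 ths by (simp add: numeral_eq_Suc)
  have r1r: "real (c 1) + real (a 1) * \<rho> 1 + real (b 1) * \<rho> 2 = real (b 0) * \<rho> 1 * \<rho> 1"
    using pc_rec[OF Pr, of 1] D3 thr by (simp add: numeral_eq_Suc)
  have t1r: "real (c 1) + real (a 1) * (\<sigma> 1 * \<rho> 1) + real (b 1) * (\<sigma> 2 * \<rho> 2)
      = real (b 0) * (\<sigma> 1 * \<rho> 1) * (\<sigma> 1 * \<rho> 1)"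
    using pc_rec[OF Pt, of 1] D3 tht by (simp add: numeral_eq_Suc)
  have s2r: "real (c 2) * \<sigma> 1 + real (a 2) * \<sigma> 2 + real (b 2) * \<sigma> 3 = real (b 0) * \<sigma> 1 * \<sigma> 2"
    using pc_rec[OF Ps, of 2] D3 ths by (simp add: numeral_eq_Suc)
  have r2r: "real (c 2) * \<rho> 1 + real (a 2) * \<rho> 2 + real (b 2) * \<rho> 3 = real (b 0) * \<rho> 1 * \<rho> 2"
    using pc_rec[OF Pr, of 2] D3 thr by (simp add: numeral_eq_Suc)
  have ax1: "\<sigma> 1 * \<rho> 1 - 1 = \<epsilon> * (\<rho> 1 - \<sigma> 1)" using AX[of 1] D3 ths(2) thr(2) by simp
  have ax3: "\<sigma> 3 * \<rho> 3 - \<sigma> 2 * \<rho> 2 = \<epsilon> * (\<sigma> 2 * \<rho> 3 - \<sigma> 3 * \<rho> 2)"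
    using AX[of 3] D3 by (simp add: numeral_eq_Suc)
  have f2: "\<sigma> 1 \<noteq> \<sigma> 3" using feas[of 2] D3 by (simp add: numeral_eq_Suc)
  have ne1: "\<epsilon> \<noteq> 1"
  proof
    assume e: "\<epsilon> = 1"
    have "(\<sigma> 1 - 1) * (\<rho> 1 + 1) = 0" using ax1 e by (simp add: algebra_simps)
    then have rm: "\<rho> 1 = -1" using s1 by simp
    have B: "real (b 1) * \<rho> 2 = real (b 1) + 2 * real (a 1)" using r1r rm k1r by simp
    have "real (b 1) * \<sigma> 2 * \<rho> 2 - real (b 1) * \<sigma> 2 = 2 * real (a 1) * \<sigma> 1"
      using s1r t1r rm by (simp add: algebra_simps)
    then have "\<sigma> 2 * (real (b 1) * \<rho> 2 - real (b 1)) = 2 * real (a 1) * \<sigma> 1"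
      by (simp add: algebra_simps)
    then have "\<sigma> 2 * (2 * real (a 1)) = 2 * real (a 1) * \<sigma> 1" using B by simp
    then have s21: "\<sigma> 2 = \<sigma> 1" using a1p by simp
    have "(\<sigma> 3 - \<sigma> 2) * (\<rho> 3 + \<rho> 2) = 0" using ax3 e by (simp add: algebra_simps)
    then have r32: "\<rho> 3 = - \<rho> 2" using f2 s21 by simp
    have "real (c 2) = (2 * real (a 2) + real (c 2)) * \<rho> 2"
      using r2r rm r32 k2r[symmetric] by (simp add: algebra_simps)
    then have "real (b 1) * real (c 2) = (2 * real (a 2) + real (c 2)) * (real (b 1) * \<rho> 2)"
      by (metis mult.left_commute)
    also have "\<dots> = (2 * real (a 2) + real (c 2)) * (real (b 1) + 2 * real (a 1))" using B by simp
    finally have "0 = 2 * real (a 2) * real (b 1) + 4 * real (a 2) * real (a 1) + 2 * real (c 2) * real (a 1)"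
      by (simp add: algebra_simps)
    moreover have "real (c 2) * real (a 1) > 0" using c2 a1p by simp
    moreover have "0 \<le> 2 * real (a 2) * real (b 1)" "0 \<le> 4 * real (a 2) * real (a 1)" by simp_all
    ultimately show False by linarith
  qed
  have ne2: "\<epsilon> \<noteq> -1"
  proof
    assume e: "\<epsilon> = -1"
    have "(\<sigma> 1 + 1) * (\<rho> 1 - 1) = 0" using ax1 e by (simp add: algebra_simps)
    then have sm: "\<sigma> 1 = -1" using r1 by simp
    have B: "real (b 1) * \<sigma> 2 = real (b 1) + 2 * real (a 1)" using s1r sm k1r by simp
    have "real (b 1) * \<sigma> 2 * \<rho> 2 - real (b 1) * \<rho> 2 = 2 * real (a 1) * \<rho> 1"
      using r1r t1r sm by (simp add: algebra_simps)
    then have "\<rho> 2 * (real (b 1) * \<sigma> 2 - real (b 1)) = 2 * real (a 1) * \<rho> 1"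
      by (simp add: algebra_simps)
    then have "\<rho> 2 * (2 * real (a 1)) = 2 * real (a 1) * \<rho> 1" using B by simp
    then have r21: "\<rho> 2 = \<rho> 1" using a1p by simp
    have "(\<sigma> 3 + \<sigma> 2) * (\<rho> 3 - \<rho> 2) = 0" using ax3 e by (simp add: algebra_simps)
    then consider "\<sigma> 3 = - \<sigma> 2" | "\<rho> 3 = \<rho> 2" by (metis add_eq_0_iff2 eq_iff_diff_eq_0 mult_eq_0_iff)
    then show False
    proof cases
      case 1
      have "real (c 2) = (2 * real (a 2) + real (c 2)) * \<sigma> 2"
        using s2r sm 1 k2r[symmetric] by (simp add: algebra_simps)
      then have "real (b 1) * real (c 2) = (2 * real (a 2) + real (c 2)) * (real (b 1) * \<sigma> 2)"
        by (metis mult.left_commute)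
      also have "\<dots> = (2 * real (a 2) + real (c 2)) * (real (b 1) + 2 * real (a 1))" using B by simp
      finally have "0 = 2 * real (a 2) * real (b 1) + 4 * real (a 2) * real (a 1) + 2 * real (c 2) * real (a 1)"
        by (simp add: algebra_simps)
      moreover have "real (c 2) * real (a 1) > 0" using c2 a1p by simp
      moreover have "0 \<le> 2 * real (a 2) * real (b 1)" "0 \<le> 4 * real (a 2) * real (a 1)" by simp_all
      ultimately show False by linarith
    next
      case 2
      have "(real (c 2) + real (a 2) + real (b 2)) * \<rho> 1 = real (b 0) * \<rho> 1 * \<rho> 1"
        using r2r r21 2 by (simp add: algebra_simps)
      then have "real (b 0) * \<rho> 1 = real (b 0) * \<rho> 1 * \<rho> 1" using k2r by simp
      hence "(real (b 0) * \<rho> 1) * (\<rho> 1 - 1) = 0" by (simp add: algebra_simps)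
      moreover have "real (b 0) \<noteq> 0" using k2r c2 by simp
      ultimately have "\<rho> 1 = 0" using r1 by simp
      then show False using pc_descent[OF Pr cpos, of 1] r21 D3 by (simp add: numeral_eq_Suc)
    qed
  qed
  assume j: "j \<in> {1..D}"
  show ?thesis
  proof
    assume A: "\<sigma> j - \<epsilon> * \<sigma> (j - 1) = 0"
    have "\<sigma> j * \<rho> j - \<sigma> (j - 1) * \<rho> (j - 1) = \<epsilon> * (\<sigma> (j - 1) * \<rho> j - \<sigma> j * \<rho> (j - 1))"
      using AX j by auto
    then have "\<rho> (j-1) * \<sigma> (j-1) * (1 - \<epsilon> * \<epsilon>) = 0"
      using A by (simp add: algebra_simps)
    moreover have "1 - \<epsilon> * \<epsilon> \<noteq> 0"
    proof
      assume "1 - \<epsilon> * \<epsilon> = 0"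
      then have "(1 - \<epsilon>) * (1 + \<epsilon>) = 0" by (simp add: algebra_simps)
      then show False using ne1 ne2 by (auto simp: add_eq_0_iff)
    qed
    ultimately consider "\<sigma> (j-1) = 0" | "\<rho> (j-1) = 0" by auto
    then show False
    proof cases
      case 1
      then have sj: "\<sigma> j = 0" using A by simp
      have "j \<noteq> 1" using 1 ths(2) by auto
      then obtain i where i: "j = Suc i" "1 \<le> i" "i < D" using j by (cases j) auto
      have "(if i = 0 then 0 else real (c i) * \<sigma> (i - 1)) + real (a i) * \<sigma> i
              + real (b i) * \<sigma> (i + 1) = ts * \<sigma> i" using pc_rec[OF Ps i(3)] .
      then have "real (c i) * \<sigma> (i - 1) = 0" using i 1 sj by simp
      then have "\<sigma> (i-1) = 0" using cpos[OF i(2,3)] by simp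
      moreover have "\<sigma> (i-1) \<noteq> \<sigma> (i+1)" using feas[of i] i by simp
      ultimately show False using sj i by simp
    next
      case 2
      have "j \<noteq> 1" using 2 thr(2) by auto
      then obtain i where i: "j = Suc i" "1 \<le> i" "i < D" using j by (cases j) auto
      have ri: "\<rho> i = 0" using 2 i by simp
      have "(if i = 0 then 0 else real (c i) * \<rho> (i - 1)) + real (a i) * \<rho> i
              + real (b i) * \<rho> (i + 1) = tr * \<rho> i" using pc_rec[OF Pr i(3)] .
      then have X1: "real (c i) * \<rho> (i - 1) + real (b i) * \<rho> (i + 1) = 0" using i ri by simp
      have "(if i = 0 then 0 else real (c i) * (\<sigma> (i - 1) * \<rho> (i - 1))) + real (a i) * (\<sigma> i * \<rho> i)
              + real (b i) * (\<sigma> (i + 1) * \<rho> (i + 1)) = tt * (\<sigma> i * \<rho> i)" using pc_rec[OF Pt i(3)] .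
      then have X2: "real (c i) * \<rho> (i - 1) * \<sigma> (i - 1) + real (b i) * \<rho> (i + 1) * \<sigma> (i + 1) = 0"
        using i ri by (simp add: algebra_simps)
      have "real (b i) * \<rho> (i + 1) = - (real (c i) * \<rho> (i - 1))" using X1 by simp
      then have "real (c i) * \<rho> (i - 1) * (\<sigma> (i - 1) - \<sigma> (i + 1)) = 0" using X2
        by (simp add: algebra_simps)
      moreover have "\<sigma> (i-1) \<noteq> \<sigma> (i+1)" using feas[of i] i by simp
      ultimately have "\<rho> (i - 1) = 0" using cpos[OF i(2,3)] by simp
      then show False using pc_descent[OF Pr cpos, of "i-1"] ri i by (simp add: less_imp_diff_less)
    qed
  qed
qed

lemma gdist_le: "(E ^^ n) x y \<Longrightarrow> gdist E x y \<le> n"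
  unfolding gdist_def by (rule Least_le)

lemma gdist_walk: "(E ^^ n) x y \<Longrightarrow> (E ^^ gdist E x y) x y"
  unfolding gdist_def by (rule LeastI)

lemma walk_end_in:
  assumes "simple_graph V E" "(E ^^ n) x z" "x \<in> V" shows "z \<in> V"
proof (cases n)
  case 0 then show ?thesis using assms by simp
next
  case (Suc m)
  then obtain w where "E w z" using assms(2) by (metis relpowp_Suc_E)
  then show ?thesis using assms(1) unfolding simple_graph_def by blast
qed

lemma exist_dist:
  assumes DR: "distance_regular V E D a b c" and m: "m \<le> D"
  shows "\<exists>x\<in>V. \<exists>z\<in>V. gdist E x z = m"
proof -
  note DR' = DR[unfolded distance_regular_def]
  note sg = conjunct1[OF DR'] and cg = conjunct1[OF conjunct2[OF DR']]
    and dm = conjunct1[OF conjunct2[OF conjunct2[OF DR']]]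
  have fin: "finite V" "V \<noteq> {}" using sg unfolding simple_graph_def by auto
  have eq: "{gdist E x y | x y. x \<in> V \<and> y \<in> V} = (\<lambda>p. gdist E (fst p) (snd p)) ` (V \<times> V)"
    by force
  have f1: "finite ((\<lambda>p. gdist E (fst p) (snd p)) ` (V \<times> V))" using fin(1) by simp
  have f2: "(\<lambda>p. gdist E (fst p) (snd p)) ` (V \<times> V) \<noteq> {}" using fin(2) by simp
  have "D \<in> (\<lambda>p. gdist E (fst p) (snd p)) ` (V \<times> V)"
    using Max_in[OF f1 f2] dm unfolding diameter_def eq by simp
  then obtain p where p: "p \<in> V \<times> V" "D = gdist E (fst p) (snd p)" by (rule imageE)
  define x where "x = fst p"
  define y where "y = snd p"
  have xy: "x \<in> V" "y \<in> V" "gdist E x y = D" using p unfolding x_def y_def by auto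
  obtain n where "(E ^^ n) x y" using cg xy unfolding connected_graph_def by blast
  then have W: "(E ^^ D) x y" using gdist_walk xy by metis
  have "(E ^^ (m + (D - m))) x y" using W m by simp
  then obtain z where z1: "(E ^^ m) x z" and z2: "(E ^^ (D - m)) z y"
    unfolding relpowp_add by auto
  have zV: "z \<in> V" using walk_end_in[OF sg z1 xy(1)] .
  have g1: "gdist E x z \<le> m" using gdist_le[OF z1] .
  have "(E ^^ (gdist E x z + (D - m))) x y"
    using gdist_walk[OF z1] z2 unfolding relpowp_add by auto
  then have "D \<le> gdist E x z + (D - m)" using gdist_le xy(3) by metis
  then have "gdist E x z = m" using g1 m by linarith
  then show ?thesis using xy(1) zV by blast
qed

lemma graph_facts:
  assumes DR: "distance_regular V E D a b c" and D3: "D \<ge> 3"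
  shows "a 0 = 0" "c 1 + a 1 + b 1 = b 0" "c 2 + a 2 + b 2 = b 0"
    "\<And>i. 1 \<le> i \<Longrightarrow> i < D \<Longrightarrow> c i \<noteq> 0"
proof -
  note DR' = DR[unfolded distance_regular_def]
  note sg = conjunct1[OF DR'] and cg = conjunct1[OF conjunct2[OF DR']]
    and reg = conjunct2[OF conjunct2[OF conjunct2[OF conjunct2[OF DR']]]]
  have fin: "finite V" "V \<noteq> {}" using sg unfolding simple_graph_def by auto
  have symm: "\<And>x y. E x y \<Longrightarrow> E y x" and irr: "\<And>x. \<not> E x x"
    and inV: "\<And>x y. E x y \<Longrightarrow> x \<in> V \<and> y \<in> V"
    using sg unfolding simple_graph_def by auto
  have walk: "\<And>x y. x \<in> V \<Longrightarrow> y \<in> V \<Longrightarrow> (E ^^ gdist E x y) x y"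
  proof -
    fix x y assume "x \<in> V" "y \<in> V"
    then obtain n where "(E ^^ n) x y" using cg unfolding connected_graph_def by blast
    then show "(E ^^ gdist E x y) x y" by (rule gdist_walk)
  qed
  have g0: "\<And>x. gdist E x x = 0" unfolding gdist_def by (rule Least_eq_0) (rule relpowp_0_I)
  have gz: "\<And>x z. x \<in> V \<Longrightarrow> z \<in> V \<Longrightarrow> gdist E x z = 0 \<Longrightarrow> z = x"
  proof -
    fix x z assume xz: "x \<in> V" "z \<in> V" "gdist E x z = 0"
    have "(E ^^ gdist E x z) x z" by (rule walk[OF xz(1,2)])
    then have "(E ^^ 0) x z" unfolding xz(3) .
    then show "z = x" by (rule relpowp_0_E) (rule sym)
  qed
  have tri1: "\<And>x y z. x \<in> V \<Longrightarrow> y \<in> V \<Longrightarrow> E y z \<Longrightarrow> gdist E x z \<le> gdist E x y + 1"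
  proof -
    fix x y z assume h: "x \<in> V" "y \<in> V" "E y z"
    have "(E ^^ Suc (gdist E x y)) x z" by (rule relpowp_Suc_I[OF walk[OF h(1,2)] h(3)])
    then have "gdist E x z \<le> Suc (gdist E x y)" by (rule gdist_le)
    then show "gdist E x z \<le> gdist E x y + 1" by simp
  qed
  have tri2: "\<And>x y z. x \<in> V \<Longrightarrow> y \<in> V \<Longrightarrow> E y z \<Longrightarrow> gdist E x y \<le> gdist E x z + 1"
  proof -
    fix x y z assume h: "x \<in> V" "y \<in> V" "E y z"
    have "z \<in> V" using inV[OF h(3)] by (rule conjunct2)
    then show "gdist E x y \<le> gdist E x z + 1" using tri1[OF h(1) _ symm[OF h(3)]] by blast
  qed
  obtain v where v: "v \<in> V" using fin by auto
  have rv: "a 0 = card {z\<in>V. E v z \<and> gdist E v z = 0}" "b 0 = card {z\<in>V. E v z \<and> gdist E v z = 1}"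
    using reg[rule_format, OF v v] unfolding g0 Let_def by auto
  have "{z\<in>V. E v z \<and> gdist E v z = 0} = {}" using gz v irr by blast
  then show "a 0 = 0" using rv(1) by (simp only: card.empty)
  have deg: "\<And>y. y \<in> V \<Longrightarrow> card {z\<in>V. E y z} = b 0"
  proof -
    fix y assume y: "y \<in> V"
    have "b 0 = card {z\<in>V. E y z \<and> gdist E y z = 1}" using reg[rule_format, OF y y] unfolding g0 Let_def by auto
    moreover have "{z\<in>V. E y z \<and> gdist E y z = 1} = {z\<in>V. E y z}"
    proof -
      have "\<And>z. z \<in> V \<Longrightarrow> E y z \<Longrightarrow> gdist E y z = 1"
      proof -
        fix z assume z: "z \<in> V" "E y z"
        have "gdist E y z \<le> 1" using tri1[OF y y z(2)] g0 by simp
        moreover have "gdist E y z \<noteq> 0" using gz[OF y z(1)] z(2) irr by blast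
        ultimately show "gdist E y z = 1" by simp
      qed
      then show ?thesis by blast
    qed
    ultimately show "card {z\<in>V. E y z} = b 0" by simp
  qed
  have sumk: "\<And>x y. x \<in> V \<Longrightarrow> y \<in> V \<Longrightarrow> gdist E x y \<ge> 1 \<Longrightarrow>
     c (gdist E x y) + a (gdist E x y) + b (gdist E x y) = b 0"
  proof -
    fix x y assume x: "x \<in> V" and y: "y \<in> V" and i1: "gdist E x y \<ge> 1"
    define i where "i = gdist E x y"
    have ci: "c i = card {z\<in>V. E y z \<and> gdist E x z = i - 1}"
      and ai: "a i = card {z\<in>V. E y z \<and> gdist E x z = i}"
      and bi: "b i = card {z\<in>V. E y z \<and> gdist E x z = i + 1}"
      using reg[rule_format, OF x y] i1 unfolding i_def Let_def by auto
    have U: "{z\<in>V. E y z} = ({z\<in>V. E y z \<and> gdist E x z = i - 1} \<union> {z\<in>V. E y z \<and> gdist E x z = i})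
         \<union> {z\<in>V. E y z \<and> gdist E x z = i + 1}"
    proof -
      have "gdist E x z = i - 1 \<or> gdist E x z = i \<or> gdist E x z = i + 1" if "E y z" for z
      proof -
        have "gdist E x z \<le> i + 1" using tri1[OF x y that] unfolding i_def .
        moreover have "i \<le> gdist E x z + 1" using tri2[OF x y that] unfolding i_def .
        ultimately show ?thesis by linarith
      qed
      then show ?thesis by blast
    qed
    have "card {z\<in>V. E y z} = card ({z\<in>V. E y z \<and> gdist E x z = i - 1} \<union> {z\<in>V. E y z \<and> gdist E x z = i})
         + card {z\<in>V. E y z \<and> gdist E x z = i + 1}"
      unfolding U by (rule card_Un_disjoint) (use fin i1 i_def in auto)
    also have "card ({z\<in>V. E y z \<and> gdist E x z = i - 1} \<union> {z\<in>V. E y z \<and> gdist E x z = i})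
       = card {z\<in>V. E y z \<and> gdist E x z = i - 1} + card {z\<in>V. E y z \<and> gdist E x z = i}"
      by (rule card_Un_disjoint) (use fin i1 i_def in auto)
    finally show "c (gdist E x y) + a (gdist E x y) + b (gdist E x y) = b 0"
      using deg[OF y] ci ai bi unfolding i_def by simp
  qed
  show "c 1 + a 1 + b 1 = b 0" using exist_dist[OF DR, of 1] D3 sumk by fastforce
  show "c 2 + a 2 + b 2 = b 0" using exist_dist[OF DR, of 2] D3 sumk by fastforce
  fix i assume i: "1 \<le> i" "i < D"
  obtain x y where xy: "x \<in> V" "y \<in> V" "gdist E x y = i" using exist_dist[OF DR, of i] i by auto
  have ci: "c i = card {z\<in>V. E y z \<and> gdist E x z = i - 1}"
    using reg[rule_format, OF xy(1,2)] xy(3) i unfolding Let_def by auto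
  have W: "(E ^^ Suc (i - 1)) x y" using walk[OF xy(1,2)] xy(3) i by simp
  then obtain w where w: "(E ^^ (i - 1)) x w" "E w y" by (metis relpowp_Suc_E)
  have wV: "w \<in> V" using inV w(2) by blast
  have "gdist E x w \<le> i - 1" using gdist_le[OF w(1)] .
  moreover have "gdist E x y \<le> gdist E x w + 1" using tri2[OF xy(1,2) symm[OF w(2)]] .
  ultimately have "gdist E x w = i - 1" using xy(3) i by linarith
  then have "w \<in> {z\<in>V. E y z \<and> gdist E x z = i - 1}" using wV symm[OF w(2)] by blast
  moreover have "finite {z\<in>V. E y z \<and> gdist E x z = i - 1}" using fin by simp
  ultimately show "c i \<noteq> 0" using ci by (metis card_0_eq empty_iff)
qed

theorem lemma15p3:
  fixes V :: "'v set" and E :: "'v \<Rightarrow> 'v \<Rightarrow> bool" and D :: nat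
    and a b c :: "nat \<Rightarrow> nat" and \<sigma> \<rho> :: "nat \<Rightarrow> real" and \<epsilon> :: real
  assumes "distance_regular V E D a b c"
    and "D \<ge> 3"
    and "a 1 \<noteq> 0"
    and "feasible_pc D a b c \<sigma>"
    and "nontrivial_pc D a b c \<rho>"
    and "tight_pair D a b c \<sigma> \<rho>"
    and "auxiliary_parameter D \<sigma> \<rho> \<epsilon>"
  shows "(\<forall>j\<in>{1..D}. \<sigma> j - \<epsilon> * \<sigma> (j - 1) \<noteq> 0) \<and>
         (\<forall>i\<le>D. \<rho> i = (\<Prod>j=1..i. (\<sigma> (j - 1) - \<epsilon> * \<sigma> j) / (\<sigma> j - \<epsilon> * \<sigma> (j - 1))))"
proof -
  note G = graph_facts[OF assms(1,2)]
  have feas0: "\<forall>i\<in>{1..D-1}. \<sigma> (i - 1) \<noteq> \<sigma> (i + 1)"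
    using assms(4) unfolding feasible_pc_def by (rule conjunct2)
  have feas: "\<And>i. 1 \<le> i \<Longrightarrow> i \<le> D - 1 \<Longrightarrow> \<sigma> (i-1) \<noteq> \<sigma> (i+1)"
    using feas0 by simp
  have "nontrivial_pc D a b c \<sigma>" using assms(4) unfolding feasible_pc_def tight_pc_def by (simp only:)
  then have s1: "\<sigma> 1 \<noteq> 1" unfolding nontrivial_pc_def by (rule conjunct2)
  have r1: "\<rho> 1 \<noteq> 1" using assms(5) unfolding nontrivial_pc_def by (rule conjunct2)
  obtain ts tr tt where Ps: "pseudo_cosine_for D a b c ts \<sigma>"
    and Pr: "pseudo_cosine_for D a b c tr \<rho>"
    and Pt: "pseudo_cosine_for D a b c tt (\<lambda>i. \<sigma> i * \<rho> i)"
    using assms(6) unfolding tight_pair_def pseudo_cosine_def by blast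
  have NZ: "\<And>j. j \<in> {1..D} \<Longrightarrow> \<sigma> j - \<epsilon> * \<sigma> (j - 1) \<noteq> 0"
    by (rule alg_nz[OF assms(2,3) G(1,2,3) G(4) feas s1 r1 Ps Pr Pt assms(7)])
  have AX: "\<And>i. i \<in> {1..D} \<Longrightarrow> \<sigma> i * \<rho> i - \<sigma> (i - 1) * \<rho> (i - 1)
                  = \<epsilon> * (\<sigma> (i - 1) * \<rho> i - \<sigma> i * \<rho> (i - 1))"
    using assms(7) unfolding auxiliary_parameter_def by blast
  have r0: "\<rho> 0 = 1" using Pr unfolding pseudo_cosine_for_def by (rule conjunct1)
  have "\<rho> i = (\<Prod>j=1..i. (\<sigma> (j - 1) - \<epsilon> * \<sigma> j) / (\<sigma> j - \<epsilon> * \<sigma> (j - 1)))" if "i \<le> D" for i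
    using that
  proof (induction i)
    case 0 then show ?case using r0 by simp
  next
    case (Suc n)
    have mem: "Suc n \<in> {1..D}" using Suc.prems by simp
    have IH: "\<rho> n = (\<Prod>j=1..n. (\<sigma> (j - 1) - \<epsilon> * \<sigma> j) / (\<sigma> j - \<epsilon> * \<sigma> (j - 1)))"
      using Suc.IH Suc.prems by simp
    have nz: "\<sigma> (Suc n) - \<epsilon> * \<sigma> n \<noteq> 0" using NZ[OF mem] by simp
    have "\<sigma> (Suc n) * \<rho> (Suc n) - \<sigma> n * \<rho> n = \<epsilon> * (\<sigma> n * \<rho> (Suc n) - \<sigma> (Suc n) * \<rho> n)"
      using AX[OF mem] by simp
    then have "\<rho> (Suc n) * (\<sigma> (Suc n) - \<epsilon> * \<sigma> n) = \<rho> n * (\<sigma> n - \<epsilon> * \<sigma> (Suc n))"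
      by (simp add: algebra_simps)
    then have R: "\<rho> (Suc n) = \<rho> n * (\<sigma> n - \<epsilon> * \<sigma> (Suc n)) / (\<sigma> (Suc n) - \<epsilon> * \<sigma> n)"
      using nz by (simp add: eq_divide_eq)
    have P: "(\<Prod>j=1..Suc n. (\<sigma> (j - 1) - \<epsilon> * \<sigma> j) / (\<sigma> j - \<epsilon> * \<sigma> (j - 1)))
       = (\<sigma> n - \<epsilon> * \<sigma> (Suc n)) / (\<sigma> (Suc n) - \<epsilon> * \<sigma> n) *
         (\<Prod>j=1..n. (\<sigma> (j - 1) - \<epsilon> * \<sigma> j) / (\<sigma> j - \<epsilon> * \<sigma> (j - 1)))"
      by (subst prod.nat_ivl_Suc') simp_all
    show ?case unfolding P R IH[symmetric] by simp
  qed
  then show ?thesis using NZ by blast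
qed

end
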